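(* Let $A_1,A_2\in\mathbb{R}^{2\times2}$ be such that $\det[A_1,A_2]=0$ and $A_1-A_2$ is invertible, and suppose $A_1$ has non-real eigenvalues. Then $A_2$ either has non-real eigenvalues or is a scalar matrix, and $B:=(A_1A_2+\mathbb{I})(A_1-A_2)^{-1}$ has complex conjugate eigenvalues (i.e. its spectrum is of the form $\{\mu,\overline{\mu}\}$).
   Context: $[A,B]=AB-BA$; $\mathbb{I}$ is the $2\times 2$ identity matrix. *)

theory Defs
  imports "HOL-Analysis.Analysis"
begin

definition cmat :: "real^'n^'m \<Rightarrow> complex^'n^'m" where
  "cmat A = (\<chi> i j. complex_of_real (A $ i $ j))"

definition cspectrum :: "real^'n^'n \<Rightarrow> complex set" where
  "cspectrum A = {z. det (cmat A - mat z) = 0}"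

definition commutator :: "real^'n^'n \<Rightarrow> real^'n^'n \<Rightarrow> real^'n^'n" where
  "commutator A B = A ** B - B ** A"

end

theory Submission imports Defs begin

definition disc :: "real^2^2 \<Rightarrow> real" where
  "disc M = (M$1$1 - M$2$2)^2 + 4 * M$1$2 * M$2$1"

lemma charpoly: fixes M :: "real^2^2" shows "det (cmat M - mat z) = (of_real (M$1$1) - z) * (of_real (M$2$2) - z) - of_real (M$1$2) * of_real (M$2$1)"
  by (simp add: det_2 cmat_def mat_def)

lemma nonreal_disc:
  assumes "z \<in> cspectrum M" "Im z \<noteq> 0" shows "disc M < 0"
proof -
  obtain x y where z: "z = Complex x y" by (cases z)
  let ?a = "M$1$1" and ?b = "M$1$2" and ?c = "M$2$1" and ?d = "M$2$2"
  have e: "(of_real ?a - z) * (of_real ?d - z) - of_real ?b * of_real ?c = 0"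
    using assms(1) by (simp add: cspectrum_def charpoly)
  have re: "(?a - x) * (?d - x) - y^2 - ?b * ?c = 0"
    using arg_cong[OF e, of Re] by (simp add: z power2_eq_square)
  have im: "y * (2*x - ?a - ?d) = 0"
    using arg_cong[OF e, of Im] by (simp add: z algebra_simps)
  have y: "y \<noteq> 0" using assms(2) z by simp
  with im have x: "2*x = ?a + ?d" by simp
  have d: "?d = 2*x - ?a" using x by simp
  have "disc M = - 4 * y^2" using re unfolding disc_def d
    by (simp add: algebra_simps power2_eq_square)
  thus ?thesis using y by simp
qed

lemma conj_spec:
  fixes M :: "real^2^2"
  assumes "disc M \<le> 0"
  shows "cspectrum M = {Complex ((M$1$1 + M$2$2)/2) (sqrt (- disc M)/2),
                        cnj (Complex ((M$1$1 + M$2$2)/2) (sqrt (- disc M)/2))}"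
proof -
  let ?a = "M$1$1" and ?b = "M$1$2" and ?c = "M$2$1" and ?d = "M$2$2"
  define p where "p = (?a + ?d)/2"
  define q where "q = sqrt (- disc M)/2"
  define \<mu> where "\<mu> = Complex p q"
  have q2: "q^2 = - disc M / 4" using assms unfolding q_def by (simp add: power_divide)
  have key: "p^2 + q^2 = ?a * ?d - ?b * ?c"
    using q2 unfolding p_def disc_def by (simp add: power2_eq_square field_simps)
  have mu: "\<mu> = of_real p + \<i> * of_real q" "cnj \<mu> = of_real p - \<i> * of_real q"
    unfolding \<mu>_def by (simp_all add: complex_eq_iff)
  have "\<And>z. det (cmat M - mat z) = (z - \<mu>) * (z - cnj \<mu>)"
  proof -
    fix z
    have "(z - \<mu>) * (z - cnj \<mu>) = z^2 - 2 * of_real p * z + of_real (p^2 + q^2)"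
      unfolding mu by (simp add: algebra_simps power2_eq_square)
    also have "\<dots> = z^2 - of_real (?a + ?d) * z + of_real (?a * ?d - ?b * ?c)"
      by (subst key) (simp add: p_def)
    also have "\<dots> = det (cmat M - mat z)"
      unfolding charpoly by (simp add: algebra_simps power2_eq_square)
    finally show "det (cmat M - mat z) = (z - \<mu>) * (z - cnj \<mu>)" by simp
  qed
  hence "cspectrum M = {\<mu>, cnj \<mu>}" unfolding cspectrum_def by auto
  thus ?thesis unfolding \<mu>_def p_def q_def .
qed

lemma mm2: fixes A B :: "real^2^2"
  shows "(A ** B)$i$j = A$i$1 * B$1$j + A$i$2 * B$2$j"
  by (simp add: matrix_matrix_mult_def sum_2)

lemma meq2: fixes A B :: "real^2^2"
  shows "A = B \<longleftrightarrow> A$1$1 = B$1$1 \<and> A$1$2 = B$1$2 \<and> A$2$1 = B$2$1 \<and> A$2$2 = B$2$2"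
  by (auto simp: vec_eq_iff forall_2)

lemma disc_b: fixes A :: "real^2^2" assumes "disc A < 0" shows "A$1$2 \<noteq> 0"
  using assms unfolding disc_def by auto

lemma comm_zero_aux:
  fixes a b c d e f g h :: real
  assumes D: "(a-d)^2 + 4*b*c < 0"
   and Q0: "(b*g - f*c) * (f*c - b*g) - (a*f + b*h - e*b - f*d) * (c*e + d*g - g*a - h*c) = 0"
  shows "b*g - f*c = 0 \<and> a*f + b*h - e*b - f*d = 0 \<and> c*e + d*g - g*a - h*c = 0"
proof -
  have b: "b \<noteq> 0" using D by auto
  define \<beta> where "\<beta> = f / b"
  define \<gamma> where "\<gamma> = g - \<beta> * c"
  define \<delta> where "\<delta> = (e - h) - \<beta> * (a - d)"
  have f: "f = \<beta> * b" using b unfolding \<beta>_def by simp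
  have g: "g = \<beta> * c + \<gamma>" unfolding \<gamma>_def by simp
  have e: "e = h + \<beta> * (a - d) + \<delta>" unfolding \<delta>_def by simp
  have C11: "b*g - f*c = b * \<gamma>" unfolding f g by (simp add: algebra_simps)
  have C12: "a*f + b*h - e*b - f*d = - b * \<delta>" unfolding f e by (simp add: algebra_simps)
  have C21: "c*e + d*g - g*a - h*c = c * \<delta> - \<gamma> * (a - d)" unfolding e g by (simp add: algebra_simps)
  have Q: "(b*\<gamma>)^2 + (- b * \<delta>) * (c * \<delta> - \<gamma> * (a - d)) = 0"
    using Q0 unfolding f g e by (simp add: algebra_simps power2_eq_square)
  have Q4: "(2*b*\<gamma> + (a-d)*\<delta>)^2 + (-((a-d)^2 + 4*b*c)) * \<delta>^2 = 0"
  proof -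
    have "(2*b*\<gamma> + (a-d)*\<delta>)^2 + (-((a-d)^2 + 4*b*c)) * \<delta>^2
        = 4 * ((b*\<gamma>)^2 + (- b * \<delta>) * (c * \<delta> - \<gamma> * (a - d)))"
      by (simp add: algebra_simps power2_eq_square)
    thus ?thesis using Q by simp
  qed
  have "\<delta>^2 = 0"
  proof (rule ccontr)
    assume "\<delta>^2 \<noteq> 0"
    hence "0 < \<delta>^2" by simp
    hence "0 < (-((a-d)^2 + 4*b*c)) * \<delta>^2" using D by simp
    with Q4 show False by (smt (verit) zero_le_power2)
  qed
  hence dl: "\<delta> = 0" by simp
  with Q4 have "\<gamma> = 0" using b by simp
  with dl show ?thesis unfolding C11 C12 C21 by simp
qed

lemma comm_zero:
  fixes A B :: "real^2^2"
  assumes "det (commutator A B) = 0" "disc A < 0"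
  shows "A ** B = B ** A"
proof -
  let ?a = "A$1$1" and ?d = "A$2$2" and ?b = "A$1$2" and ?c = "A$2$1"
  let ?e = "B$1$1" and ?h = "B$2$2" and ?f = "B$1$2" and ?g = "B$2$1"
  have Q0: "(?b*?g - ?f*?c) * (?f*?c - ?b*?g) - (?a*?f + ?b*?h - ?e*?b - ?f*?d) * (?c*?e + ?d*?g - ?g*?a - ?h*?c) = 0"
    using assms(1) unfolding commutator_def det_2 by (simp add: mm2 algebra_simps)
  have D: "(?a-?d)^2 + 4*?b*?c < 0" using assms(2) unfolding disc_def .
  note r = comm_zero_aux[OF D Q0]
  show ?thesis unfolding meq2 using r by (simp add: mm2 algebra_simps)
qed

lemma disc_alg:
  fixes a b c d m11 m12 m21 m22 :: real
  assumes "b \<noteq> 0" "m21 = m12 * c / b" "m11 - m22 = m12 * (a - d) / b"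
  shows "(m11 - m22)^2 + 4 * m12 * m21 = (m12 / b)^2 * ((a - d)^2 + 4 * b * c)"
proof -
  have "(m11 - m22)^2 + 4 * m12 * m21 = (m12 * (a - d) / b)^2 + 4 * m12 * (m12 * c / b)"
    using assms by simp
  also have "\<dots> = (m12 / b)^2 * ((a - d)^2 + 4 * b * c)"
    using assms(1) by (simp add: power2_eq_square field_simps)
  finally show ?thesis .
qed

lemma comm_disc:
  fixes A M :: "real^2^2"
  assumes "A ** M = M ** A" "A$1$2 \<noteq> 0"
  shows "disc M = (M$1$2 / A$1$2)^2 * disc A \<and> (M$1$2 = 0 \<longrightarrow> M = mat (M$1$1))"
proof -
  let ?a = "A$1$1" and ?d = "A$2$2" and ?b = "A$1$2" and ?c = "A$2$1"
  have "(A ** M)$1$1 = (M ** A)$1$1" "(A ** M)$1$2 = (M ** A)$1$2" using assms(1) by simp_all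
  hence e1: "?a * M$1$1 + ?b * M$2$1 = M$1$1 * ?a + M$1$2 * ?c"
    and e2: "?a * M$1$2 + ?b * M$2$2 = M$1$1 * ?b + M$1$2 * ?d"
    unfolding mm2 by simp_all
  have m21: "M$2$1 = M$1$2 * ?c / ?b" using e1 assms(2)
    by (simp add: eq_divide_eq mult.commute)
  have "(M$1$1 - M$2$2) * ?b = M$1$2 * (?a - ?d)" using e2 by (simp add: algebra_simps)
  hence m11: "M$1$1 - M$2$2 = M$1$2 * (?a - ?d) / ?b" using assms(2)
    by (simp add: eq_divide_eq)
  have "disc M = (M$1$2 / ?b)^2 * disc A"
    unfolding disc_def by (rule disc_alg[OF assms(2) m21 m11])
  moreover have "M$1$2 = 0 \<longrightarrow> M = mat (M$1$1)"
  proof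
    assume "M$1$2 = 0"
    thus "M = mat (M$1$1)" using m21 m11 unfolding meq2 by (simp add: mat_def)
  qed
  ultimately show ?thesis by simp
qed

lemma rdistrib: fixes A B C :: "real^2^2" shows "(B + C) ** A = B ** A + C ** A"
  by (simp add: vec_eq_iff matrix_matrix_mult_def sum.distrib algebra_simps)

lemma comm_mult: fixes A X Y :: "real^2^2"
  assumes "A ** X = X ** A" "A ** Y = Y ** A" shows "A ** (X ** Y) = (X ** Y) ** A"
proof -
  have "A ** (X ** Y) = (A ** X) ** Y" by (simp add: matrix_mul_assoc)
  also have "\<dots> = X ** (A ** Y)" by (simp add: assms(1) matrix_mul_assoc)
  also have "\<dots> = (X ** Y) ** A" by (simp add: assms(2) matrix_mul_assoc)
  finally show ?thesis .
qed

lemma comm_P: fixes A B :: "real^2^2"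
  assumes "A ** B = B ** A" shows "A ** (A ** B + mat 1) = (A ** B + mat 1) ** A"
  by (simp add: matrix_add_ldistrib rdistrib comm_mult assms)

lemma comm_N: fixes A B :: "real^2^2"
  assumes "A ** B = B ** A" shows "A ** (A - B) = (A - B) ** A"
proof -
  have l: "A ** (A - B) = A ** A - A ** B"
    by (simp add: vec_eq_iff matrix_matrix_mult_def sum_subtractf algebra_simps)
  have r: "(A - B) ** A = A ** A - B ** A"
    by (simp add: vec_eq_iff matrix_matrix_mult_def sum_subtractf algebra_simps)
  show ?thesis unfolding l r assms ..
qed

lemma comm_inv: fixes A N :: "real^2^2"
  assumes "invertible N" "A ** N = N ** A" shows "A ** matrix_inv N = matrix_inv N ** A"
proof -
  have "\<exists>N'. N ** N' = mat 1 \<and> N' ** N = mat 1" using assms(1) unfolding invertible_def by blast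
  hence i: "N ** matrix_inv N = mat 1" "matrix_inv N ** N = mat 1"
    unfolding matrix_inv_def by (metis (mono_tags, lifting) someI_ex)+
  let ?I = "matrix_inv N"
  have "?I ** A = ?I ** A ** (N ** ?I)" by (simp add: i)
  also have "\<dots> = ?I ** (A ** N) ** ?I" by (simp add: matrix_mul_assoc)
  also have "\<dots> = ?I ** (N ** A) ** ?I" by (simp add: assms(2))
  also have "\<dots> = (?I ** N) ** A ** ?I" by (simp add: matrix_mul_assoc)
  also have "\<dots> = A ** ?I" by (simp add: i)
  finally show ?thesis by simp
qed

theorem lemma2p9:
  fixes A1 A2 :: "real^2^2"
  assumes "det (commutator A1 A2) = 0"
    and "invertible (A1 - A2)"
    and "\<exists>z\<in>cspectrum A1. Im z \<noteq> 0"
  shows "((\<exists>z\<in>cspectrum A2. Im z \<noteq> 0) \<or> (\<exists>c::real. A2 = mat c))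
    \<and> (\<exists>\<mu>. cspectrum ((A1 ** A2 + mat 1) ** matrix_inv (A1 - A2)) = {\<mu>, cnj \<mu>})"
proof -
  have D: "disc A1 < 0" using assms(3) nonreal_disc by blast
  have b: "A1$1$2 \<noteq> 0" using disc_b[OF D] .
  have c: "A1 ** A2 = A2 ** A1" using comm_zero[OF assms(1) D] .
  have part1: "(\<exists>z\<in>cspectrum A2. Im z \<noteq> 0) \<or> (\<exists>c::real. A2 = mat c)"
  proof (cases "A2$1$2 = 0")
    case True thus ?thesis using comm_disc[OF c b] by blast
  next
    case False
    hence "(A2$1$2 / A1$1$2)^2 > 0" using b by simp
    hence "disc A2 < 0" using comm_disc[OF c b] D by (simp add: mult_pos_neg)
    hence "sqrt (- disc A2) / 2 \<noteq> 0" by simp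
    thus ?thesis using conj_spec[of A2] \<open>disc A2 < 0\<close> by auto
  qed
  let ?B = "(A1 ** A2 + mat 1) ** matrix_inv (A1 - A2)"
  have cB: "A1 ** ?B = ?B ** A1"
    by (rule comm_mult[OF comm_P[OF c] comm_inv[OF assms(2) comm_N[OF c]]])
  have "disc ?B \<le> 0" using comm_disc[OF cB b] D by (simp add: mult_nonneg_nonpos)
  hence "\<exists>\<mu>. cspectrum ?B = {\<mu>, cnj \<mu>}" using conj_spec by blast
  with part1 show ?thesis by blast
qed

end
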